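(* Let $(L,\le,\bot,\top)$ be a complete lattice and $(\&_i,\swarrow^i,\nwarrow_i)$, $i=1,\dots,n$, adjoint triples on $L$ with $x\,\&_i\,\top=\top\,\&_i\,x=x$ for all $x\in L$ and all $i$. Let $(A,B,R,\sigma)$ be a normalized context whose concept lattice $\mathcal{M}$ has a decomposition into independent blocks $\{K_\mu\}_{\mu\in\Lambda}$, and let $A_\mu,B_\mu$ be the associated sets defined below. Then $(A_\mu,B_\mu,R_\mu,\sigma_\mu)$, where $R_\mu,\sigma_\mu$ are the restrictions of $R,\sigma$ to $A_\mu\times B_\mu$, is a separable subcontext of $(A,B,R,\sigma)$ for every $\mu\in\Lambda$.
   Context: An adjoint triple on $L$ is a triple of maps $\&,\swarrow,\nwarrow\colon L\times L\to L$ with $x\le z\swarrow y\iff x\& y\le z\iff y\le z\nwarrow x$. A context is $(A,B,R,\sigma)$ with $A,B$ non-empty, $R\colon A\times B\to L$, $\sigma\colon A\times B\to\{1,\dots,n\}$; normalized means every $a\in A$ has $b_1,b_2$ with $R(a,b_1)\ne\bot$, $R(a,b_2)=\bot$, and every $b\in B$ has $a_1,a_2$ with $R(a_1,b)\ne\bot$, $R(a_2,b)=\bot$. For $g\colon B\to L$, $f\colon A\to L$: $g^\uparrow(a)=\inf_{b}R(a,b)\swarrow^{\sigma(a,b)}g(b)$, $f^\downarrow(b)=\inf_{a}R(a,b)\nwarrow_{\sigma(a,b)}f(a)$. $\mathcal{M}$ is the complete lattice of pairs $\langle g,f\rangle$ with $g^\uparrow=f$, $f^\downarrow=g$, ordered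 by $g_1\le g_2$ pointwise; top $\langle g_\top,f_\bot\rangle$, bottom $\langle g_\bot,f_\top\rangle$ ($g_\top,g_\bot,f_\top,f_\bot$ constant maps). $\phi_{a,x}\colon A\to L$ takes value $x$ at $a$ and $\bot$ elsewhere; $\phi_{b,y}\colon B\to L$ takes value $y$ at $b$ and $\bot$ elsewhere. For a bounded lattice $(M,\preceq,\bot,\top)$, a block is a sublattice $K\subsetneq M$ with $K\setminus\{\bot,\top\}\ne\varnothing$ and $(\{x\mid k\preceq x\}\cup\{x\mid x\preceq k\})\setminus\{\bot,\top\}\subseteq K$ for all $k\in K\setminus\{\bot,\top\}$; blocks $K_1,K_2$ are independent if $K_1\cap K_2\subseteq\{\bot,\top\}$; a decomposition into independent blocks is a family of pairwise independent blocks whose union is $M$. With $K_\mu^*=K_\mu\setminus\{\langle g_\top,f_\bot\rangle,\langle g_\bot,f_\top\rangle\}$: $A_\mu=\{a\in A\mid\langle\phi_{a,x}^\downarrow,\phi_{a,x}^{\downarrow\uparrow}\rangle\in K_\mu^*\text{ for some }x\in L\}$ and $B_\mu=\{b\in B\mid\langle\phi_{b,y}^{\uparrow\downarrow},\phi_{b,y}^{\uparrow}\rangle\in K_\mu^*\text{ for some }y\in L\}$. A separable subcontext is a tuple $(Y,X,R_{Y\times X},\sigma_{Y\times X})$ with $Y\subsetneq A$, $X\subsetneq B$ non-empty, such that $R(a,b)\ne\bot$ for some $a\in Y,b\in X$, $R(a,b')=\bot$ for all $(a,b')\in Y\times(B\setminus X)$, and $R(a',b)=\bot$ for all $(a',b)\in(A\setminus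 Y)\times X$. *)

theory Defs
  imports Main
begin

text \<open>The sets A and B of
 the context are represented by the (non-empty) types 'a and 'b. The adjoint triples
 are indexed by i :: nat; conj i x y = x &_i y, sw i z y = z \<swarrow>^i y, nw i z x = z \<nwarrow>_i x.\<close>

definition adjoint_triple ::
  "('l::complete_lattice \<Rightarrow> 'l \<Rightarrow> 'l) \<Rightarrow> ('l \<Rightarrow> 'l \<Rightarrow> 'l) \<Rightarrow> ('l \<Rightarrow> 'l \<Rightarrow> 'l) \<Rightarrow> bool" where
  "adjoint_triple cj sw nw \<longleftrightarrow>
     (\<forall>x y z. (x \<le> sw z y \<longleftrightarrow> cj x y \<le> z) \<and> (cj x y \<le> z \<longleftrightarrow> y \<le> nw z x))"

definition normalized_context :: "('a \<Rightarrow> 'b \<Rightarrow> 'l::complete_lattice) \<Rightarrow> bool" where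
  "normalized_context R \<longleftrightarrow>
     (\<forall>a. \<exists>b1 b2. R a b1 \<noteq> bot \<and> R a b2 = bot) \<and>
     (\<forall>b. \<exists>a1 a2. R a1 b \<noteq> bot \<and> R a2 b = bot)"

definition up_op ::
  "(nat \<Rightarrow> 'l \<Rightarrow> 'l \<Rightarrow> 'l::complete_lattice) \<Rightarrow> ('a \<Rightarrow> 'b \<Rightarrow> 'l) \<Rightarrow> ('a \<Rightarrow> 'b \<Rightarrow> nat)
    \<Rightarrow> ('b \<Rightarrow> 'l) \<Rightarrow> ('a \<Rightarrow> 'l)" where
  "up_op sw R \<sigma> g = (\<lambda>a. INF b. sw (\<sigma> a b) (R a b) (g b))"

definition down_op ::
  "(nat \<Rightarrow> 'l \<Rightarrow> 'l \<Rightarrow> 'l::complete_lattice) \<Rightarrow> ('a \<Rightarrow> 'b \<Rightarrow> 'l) \<Rightarrow> ('a \<Rightarrow> 'b \<Rightarrow> nat)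
    \<Rightarrow> ('a \<Rightarrow> 'l) \<Rightarrow> ('b \<Rightarrow> 'l)" where
  "down_op nw R \<sigma> f = (\<lambda>b. INF a. nw (\<sigma> a b) (R a b) (f a))"

definition concepts ::
  "(nat \<Rightarrow> 'l \<Rightarrow> 'l \<Rightarrow> 'l::complete_lattice) \<Rightarrow> (nat \<Rightarrow> 'l \<Rightarrow> 'l \<Rightarrow> 'l) \<Rightarrow> ('a \<Rightarrow> 'b \<Rightarrow> 'l)
    \<Rightarrow> ('a \<Rightarrow> 'b \<Rightarrow> nat) \<Rightarrow> (('b \<Rightarrow> 'l) \<times> ('a \<Rightarrow> 'l)) set" where
  "concepts sw nw R \<sigma> = {(g, f). up_op sw R \<sigma> g = f \<and> down_op nw R \<sigma> f = g}"

definition cle :: "('b \<Rightarrow> 'l::complete_lattice) \<times> ('a \<Rightarrow> 'l) \<Rightarrow> ('b \<Rightarrow> 'l) \<times> ('a \<Rightarrow> 'l) \<Rightarrow> bool" where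
  "cle p q \<longleftrightarrow> fst p \<le> fst q"

definition ctop :: "('b \<Rightarrow> 'l::complete_lattice) \<times> ('a \<Rightarrow> 'l)" where
  "ctop = ((\<lambda>b. top), (\<lambda>a. bot))"

definition cbot :: "('b \<Rightarrow> 'l::complete_lattice) \<times> ('a \<Rightarrow> 'l)" where
  "cbot = ((\<lambda>b. bot), (\<lambda>a. top))"

definition is_glb :: "('x \<Rightarrow> 'x \<Rightarrow> bool) \<Rightarrow> 'x set \<Rightarrow> 'x \<Rightarrow> 'x \<Rightarrow> 'x \<Rightarrow> bool" where
  "is_glb le M x y z \<longleftrightarrow> z \<in> M \<and> le z x \<and> le z y \<and> (\<forall>w\<in>M. le w x \<and> le w y \<longrightarrow> le w z)"

definition is_lub :: "('x \<Rightarrow> 'x \<Rightarrow> bool) \<Rightarrow> 'x set \<Rightarrow> 'x \<Rightarrow> 'x \<Rightarrow> 'x \<Rightarrow> bool" where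
  "is_lub le M x y z \<longleftrightarrow> z \<in> M \<and> le x z \<and> le y z \<and> (\<forall>w\<in>M. le x w \<and> le y w \<longrightarrow> le z w)"

definition sublattice :: "('x \<Rightarrow> 'x \<Rightarrow> bool) \<Rightarrow> 'x set \<Rightarrow> 'x set \<Rightarrow> bool" where
  "sublattice le M K \<longleftrightarrow> K \<noteq> {} \<and> K \<subseteq> M \<and>
     (\<forall>x\<in>K. \<forall>y\<in>K. \<forall>z. is_glb le M x y z \<longrightarrow> z \<in> K) \<and>
     (\<forall>x\<in>K. \<forall>y\<in>K. \<forall>z. is_lub le M x y z \<longrightarrow> z \<in> K)"

definition is_block :: "('x \<Rightarrow> 'x \<Rightarrow> bool) \<Rightarrow> 'x set \<Rightarrow> 'x \<Rightarrow> 'x \<Rightarrow> 'x set \<Rightarrow> bool" where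
  "is_block le M bt tp K \<longleftrightarrow> sublattice le M K \<and> K \<subset> M \<and> K - {bt, tp} \<noteq> {} \<and>
     (\<forall>k \<in> K - {bt, tp}. ({x\<in>M. le k x} \<union> {x\<in>M. le x k}) - {bt, tp} \<subseteq> K)"

definition independent_blocks :: "'x \<Rightarrow> 'x \<Rightarrow> 'x set \<Rightarrow> 'x set \<Rightarrow> bool" where
  "independent_blocks bt tp K1 K2 \<longleftrightarrow> K1 \<inter> K2 \<subseteq> {bt, tp}"

definition block_decomposition ::
  "('x \<Rightarrow> 'x \<Rightarrow> bool) \<Rightarrow> 'x set \<Rightarrow> 'x \<Rightarrow> 'x \<Rightarrow> 'i set \<Rightarrow> ('i \<Rightarrow> 'x set) \<Rightarrow> bool" where
  "block_decomposition le M bt tp \<Lambda> K \<longleftrightarrow>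
     (\<forall>\<mu>\<in>\<Lambda>. is_block le M bt tp (K \<mu>)) \<and>
     (\<forall>\<mu>\<in>\<Lambda>. \<forall>\<nu>\<in>\<Lambda>. \<mu> \<noteq> \<nu> \<longrightarrow> independent_blocks bt tp (K \<mu>) (K \<nu>)) \<and>
     (\<Union>\<mu>\<in>\<Lambda>. K \<mu>) = M"

definition phiA :: "'a \<Rightarrow> 'l::complete_lattice \<Rightarrow> 'a \<Rightarrow> 'l" where
  "phiA a x = (\<lambda>a'. if a' = a then x else bot)"

definition phiB :: "'b \<Rightarrow> 'l::complete_lattice \<Rightarrow> 'b \<Rightarrow> 'l" where
  "phiB b y = (\<lambda>b'. if b' = b then y else bot)"

definition A_mu ::
  "(nat \<Rightarrow> 'l \<Rightarrow> 'l \<Rightarrow> 'l::complete_lattice) \<Rightarrow> (nat \<Rightarrow> 'l \<Rightarrow> 'l \<Rightarrow> 'l) \<Rightarrow> ('a \<Rightarrow> 'b \<Rightarrow> 'l)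
    \<Rightarrow> ('a \<Rightarrow> 'b \<Rightarrow> nat) \<Rightarrow> (('b \<Rightarrow> 'l) \<times> ('a \<Rightarrow> 'l)) set \<Rightarrow> 'a set" where
  "A_mu sw nw R \<sigma> K = {a. \<exists>x.
     (down_op nw R \<sigma> (phiA a x), up_op sw R \<sigma> (down_op nw R \<sigma> (phiA a x))) \<in> K - {ctop, cbot}}"

definition B_mu ::
  "(nat \<Rightarrow> 'l \<Rightarrow> 'l \<Rightarrow> 'l::complete_lattice) \<Rightarrow> (nat \<Rightarrow> 'l \<Rightarrow> 'l \<Rightarrow> 'l) \<Rightarrow> ('a \<Rightarrow> 'b \<Rightarrow> 'l)
    \<Rightarrow> ('a \<Rightarrow> 'b \<Rightarrow> nat) \<Rightarrow> (('b \<Rightarrow> 'l) \<times> ('a \<Rightarrow> 'l)) set \<Rightarrow> 'b set" where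
  "B_mu sw nw R \<sigma> K = {b. \<exists>y.
     (down_op nw R \<sigma> (up_op sw R \<sigma> (phiB b y)), up_op sw R \<sigma> (phiB b y)) \<in> K - {ctop, cbot}}"

text \<open>(Y, X, R restricted, \<sigma> restricted) is a separable subcontext of (A,B,R,\<sigma>) with A = UNIV,
  B = UNIV. The restrictions are determined by Y, X, so only Y, X and R are parameters.\<close>
definition separable_subcontext :: "('a \<Rightarrow> 'b \<Rightarrow> 'l::complete_lattice) \<Rightarrow> 'a set \<Rightarrow> 'b set \<Rightarrow> bool" where
  "separable_subcontext R Y X \<longleftrightarrow>
     Y \<noteq> {} \<and> X \<noteq> {} \<and> Y \<subset> UNIV \<and> X \<subset> UNIV \<and>
     (\<exists>a\<in>Y. \<exists>b\<in>X. R a b \<noteq> bot) \<and>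
     (\<forall>a\<in>Y. \<forall>b'. b' \<notin> X \<longrightarrow> R a b' = bot) \<and>
     (\<forall>a'. \<forall>b\<in>X. a' \<notin> Y \<longrightarrow> R a' b = bot)"

end

theory Submission
  imports Defs
begin

locale ctx35 =
  fixes cj sw nw :: "nat \<Rightarrow> 'l::complete_lattice \<Rightarrow> 'l \<Rightarrow> 'l"
    and n :: nat
    and R :: "'a \<Rightarrow> 'b \<Rightarrow> 'l"
    and \<sigma> :: "'a \<Rightarrow> 'b \<Rightarrow> nat"
  assumes adj: "\<forall>i\<in>{1..n}. adjoint_triple (cj i) (sw i) (nw i)"
    and unit: "\<forall>i\<in>{1..n}. \<forall>x. cj i x top = x \<and> cj i top x = x"
    and sigma_range: "\<forall>a b. \<sigma> a b \<in> {1..n}"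
    and norm: "normalized_context R"
begin

abbreviation "up \<equiv> up_op sw R \<sigma>"
abbreviation "down \<equiv> down_op nw R \<sigma>"
abbreviation "M \<equiv> concepts sw nw R \<sigma>"

lemma adj1: "x \<le> sw (\<sigma> a b) z y \<longleftrightarrow> cj (\<sigma> a b) x y \<le> z"
  using adj sigma_range unfolding adjoint_triple_def by blast

lemma adj2: "cj (\<sigma> a b) x y \<le> z \<longleftrightarrow> y \<le> nw (\<sigma> a b) z x"
  using adj sigma_range unfolding adjoint_triple_def by blast

lemma unit1: "cj (\<sigma> a b) x top = x" and unit2: "cj (\<sigma> a b) top x = x"
  using unit sigma_range by blast+

lemma galois: "g \<le> down f \<longleftrightarrow> f \<le> up g"
proof -
  have "g \<le> down f \<longleftrightarrow> (\<forall>a b. g b \<le> nw (\<sigma> a b) (R a b) (f a))"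
    unfolding down_op_def le_fun_def by (auto simp: le_INF_iff)
  also have "\<dots> \<longleftrightarrow> (\<forall>a b. f a \<le> sw (\<sigma> a b) (R a b) (g b))"
    using adj1 adj2 by blast
  also have "\<dots> \<longleftrightarrow> f \<le> up g"
    unfolding up_op_def le_fun_def by (auto simp: le_INF_iff)
  finally show ?thesis .
qed

lemma down_anti: "f1 \<le> f2 \<Longrightarrow> down f2 \<le> down f1"
  by (metis galois order_refl order_trans)

lemma up_anti: "g1 \<le> g2 \<Longrightarrow> up g2 \<le> up g1"
  by (metis galois order_refl order_trans)

lemma ext_g: "g \<le> down (up g)" by (simp add: galois)
lemma ext_f: "f \<le> up (down f)" by (simp add: galois[symmetric])

lemma udu: "up (down (up g)) = up g"
  by (meson antisym ext_f ext_g up_anti)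
lemma dud: "down (up (down f)) = down f"
  by (meson antisym ext_f ext_g down_anti)

lemma concept_D: "(down (up g), up g) \<in> M"
  unfolding concepts_def by (simp add: udu)
lemma concept_C: "(down f, up (down f)) \<in> M"
  unfolding concepts_def by (simp add: dud)

lemma bot_ne_top: "(bot::'l) \<noteq> top"
proof
  assume h: "(bot::'l) = top"
  obtain a :: 'a where "True" by simp
  from norm obtain b1 where "R a b1 \<noteq> bot" unfolding normalized_context_def by blast
  moreover have "R a b1 = bot" using h by (metis bot_unique top_greatest)
  ultimately show False by simp
qed

lemma nw_bot: "nw (\<sigma> a b) z bot = top"
  by (metis adj1 adj2 bot_least top_le)
lemma nw_top: "nw (\<sigma> a b) z top = z"
  by (metis adj2 antisym order_refl unit2)
lemma sw_bot: "sw (\<sigma> a b) z bot = top"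
  by (metis adj1 adj2 bot_least top_le)
lemma sw_top: "sw (\<sigma> a b) z top = z"
  by (metis adj1 antisym order_refl unit1)

lemma down_phiA_top: "down (phiA a top) = R a"
proof
  fix b
  have "down (phiA a top) b = (INF a'. nw (\<sigma> a' b) (R a' b) (phiA a top a'))"
    by (simp add: down_op_def)
  also have "\<dots> = R a b"
  proof (rule antisym)
    show "(INF a'. nw (\<sigma> a' b) (R a' b) (phiA a top a')) \<le> R a b"
      by (rule INF_lower2[of a]) (simp_all add: phiA_def nw_top)
    show "R a b \<le> (INF a'. nw (\<sigma> a' b) (R a' b) (phiA a top a'))"
      by (rule INF_greatest) (simp add: phiA_def nw_top nw_bot)
  qed
  finally show "down (phiA a top) b = R a b" .
qed

lemma up_phiB_top: "up (phiB b top) = (\<lambda>a. R a b)"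
proof
  fix a
  have "up (phiB b top) a = (INF b'. sw (\<sigma> a b') (R a b') (phiB b top b'))"
    by (simp add: up_op_def)
  also have "\<dots> = R a b"
  proof (rule antisym)
    show "(INF b'. sw (\<sigma> a b') (R a b') (phiB b top b')) \<le> R a b"
      by (rule INF_lower2[of b]) (simp_all add: phiB_def sw_top)
    show "R a b \<le> (INF b'. sw (\<sigma> a b') (R a b') (phiB b top b'))"
      by (rule INF_greatest) (simp add: phiB_def sw_top sw_bot)
  qed
  finally show "up (phiB b top) a = R a b" .
qed

lemma up_top: "up (\<lambda>b. top) = (\<lambda>a. bot)"
proof
  fix a
  from norm obtain b2 where "R a b2 = bot" unfolding normalized_context_def by blast
  then show "up (\<lambda>b. top) a = bot"
    unfolding up_op_def by (metis (no_types, lifting) INF_lower bot_unique iso_tuple_UNIV_I sw_top)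
qed

lemma down_bot_fun: "down (\<lambda>a. bot) = (\<lambda>b. top)"
  unfolding down_op_def by (simp add: nw_bot)
lemma up_bot_fun: "up (\<lambda>b. bot) = (\<lambda>a. top)"
  unfolding up_op_def by (simp add: sw_bot)

lemma M_top: "p \<in> M \<Longrightarrow> fst p = (\<lambda>b. top) \<Longrightarrow> p = ctop"
  unfolding concepts_def ctop_def using up_top by auto
lemma M_bot: "p \<in> M \<Longrightarrow> fst p = (\<lambda>b. bot) \<Longrightarrow> p = cbot"
  unfolding concepts_def cbot_def using up_bot_fun by auto

definition "Cc a x = (down (phiA a x), up (down (phiA a x)))"
definition "Dc b y = (down (up (phiB b y)), up (phiB b y))"

lemma Cc_M: "Cc a x \<in> M" unfolding Cc_def by (rule concept_C)
lemma Dc_M: "Dc b y \<in> M" unfolding Dc_def by (rule concept_D)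

lemma Ctop_nt: "Cc a top \<notin> {ctop, cbot}"
proof -
  from norm obtain b1 b2 where b: "R a b1 \<noteq> bot" "R a b2 = bot" unfolding normalized_context_def by blast
  have "fst (Cc a top) = R a" by (simp add: Cc_def down_phiA_top)
  then show ?thesis using b bot_ne_top unfolding ctop_def cbot_def
    by (auto dest: fun_cong[of _ _ b1] fun_cong[of _ _ b2])
qed

lemma Dtop_nt: "Dc b top \<notin> {ctop, cbot}"
proof -
  from norm obtain a1 a2 where a: "R a1 b \<noteq> bot" "R a2 b = bot" unfolding normalized_context_def by blast
  have "snd (Dc b top) = (\<lambda>a. R a b)" by (simp add: Dc_def up_phiB_top)
  then show ?thesis using a bot_ne_top unfolding ctop_def cbot_def
    by (auto dest: fun_cong[of _ _ a1] fun_cong[of _ _ a2])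
qed

lemma A_mu_eq: "A_mu sw nw R \<sigma> K = {a. \<exists>x. Cc a x \<in> K - {ctop, cbot}}"
  unfolding A_mu_def Cc_def ..
lemma B_mu_eq: "B_mu sw nw R \<sigma> K = {b. \<exists>y. Dc b y \<in> K - {ctop, cbot}}"
  unfolding B_mu_def Dc_def ..

end

locale dec35 = ctx35 cj sw nw n R \<sigma>
  for cj sw nw :: "nat \<Rightarrow> 'l::complete_lattice \<Rightarrow> 'l \<Rightarrow> 'l"
    and n :: nat
    and R :: "'a \<Rightarrow> 'b \<Rightarrow> 'l"
    and \<sigma> :: "'a \<Rightarrow> 'b \<Rightarrow> nat" +
  fixes \<Lambda> :: "'i set"
    and K :: "'i \<Rightarrow> (('b \<Rightarrow> 'l) \<times> ('a \<Rightarrow> 'l)) set"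
  assumes decomp: "block_decomposition cle (concepts sw nw R \<sigma>) cbot ctop \<Lambda> K"
begin

lemma blk:
  assumes "\<nu> \<in> \<Lambda>" "p \<in> K \<nu>" "p \<notin> {ctop, cbot}" "q \<in> M" "q \<notin> {ctop, cbot}"
    "cle p q \<or> cle q p"
  shows "q \<in> K \<nu>"
proof -
  have "\<forall>k \<in> K \<nu> - {cbot, ctop}. ({x\<in>M. cle k x} \<union> {x\<in>M. cle x k}) - {cbot, ctop} \<subseteq> K \<nu>"
    using decomp assms(1) unfolding block_decomposition_def is_block_def by blast
  then show ?thesis using assms by blast
qed

lemma A_iff: assumes "\<nu> \<in> \<Lambda>" shows "a \<in> A_mu sw nw R \<sigma> (K \<nu>) \<longleftrightarrow> Cc a top \<in> K \<nu>"
proof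
  assume "a \<in> A_mu sw nw R \<sigma> (K \<nu>)"
  then obtain x where x: "Cc a x \<in> K \<nu>" "Cc a x \<notin> {ctop, cbot}" unfolding A_mu_eq by blast
  have "phiA a x \<le> phiA a top" by (simp add: phiA_def le_fun_def)
  then have "cle (Cc a top) (Cc a x)" unfolding cle_def Cc_def by (simp add: down_anti)
  then show "Cc a top \<in> K \<nu>" using blk[OF assms x Cc_M Ctop_nt] by blast
next
  assume "Cc a top \<in> K \<nu>"
  then show "a \<in> A_mu sw nw R \<sigma> (K \<nu>)" unfolding A_mu_eq using Ctop_nt by blast
qed

lemma B_iff: assumes "\<nu> \<in> \<Lambda>" shows "b \<in> B_mu sw nw R \<sigma> (K \<nu>) \<longleftrightarrow> Dc b top \<in> K \<nu>"
proof
  assume "b \<in> B_mu sw nw R \<sigma> (K \<nu>)"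
  then obtain y where y: "Dc b y \<in> K \<nu>" "Dc b y \<notin> {ctop, cbot}" unfolding B_mu_eq by blast
  have "phiB b y \<le> phiB b top" by (simp add: phiB_def le_fun_def)
  then have "cle (Dc b y) (Dc b top)" unfolding cle_def Dc_def by (simp add: down_anti up_anti)
  then show "Dc b top \<in> K \<nu>" using blk[OF assms y Dc_M Dtop_nt] by blast
next
  assume "Dc b top \<in> K \<nu>"
  then show "b \<in> B_mu sw nw R \<sigma> (K \<nu>)" unfolding B_mu_eq using Dtop_nt by blast
qed

lemma link:
  assumes nz: "R a b \<noteq> bot" and nu: "\<nu> \<in> \<Lambda>"
  shows "Cc a top \<in> K \<nu> \<longleftrightarrow> Dc b top \<in> K \<nu>"
proof -
  define E where "E = Dc b (R a b)"
  have EM: "E \<in> M" unfolding E_def by (rule Dc_M)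
  have le1: "phiB b (R a b) \<le> R a" by (simp add: phiB_def le_fun_def)
  have "fst E \<le> down (up (R a))" unfolding E_def Dc_def using le1 by (simp add: down_anti up_anti)
  also have "down (up (R a)) = R a" by (metis down_phiA_top dud)
  finally have E1: "fst E \<le> R a" .
  have E2: "phiB b (R a b) \<le> fst E" unfolding E_def Dc_def by (simp add: ext_g)
  have Ent: "E \<notin> {ctop, cbot}"
  proof
    assume "E \<in> {ctop, cbot}"
    then have "fst E = (\<lambda>b. top) \<or> fst E = (\<lambda>b. bot)" unfolding ctop_def cbot_def by auto
    moreover
    from norm obtain b2 where "R a b2 = bot" unfolding normalized_context_def by blast
    ultimately show False using E1 E2 nz bot_ne_top unfolding le_fun_def phiB_def
      by (metis (full_types) bot.extremum_uniqueI top.extremum_uniqueI)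
  qed
  have c1: "cle E (Cc a top)" using E1 unfolding cle_def Cc_def by (simp add: down_phiA_top)
  have "phiB b (R a b) \<le> phiB b top" by (simp add: phiB_def le_fun_def)
  then have c2: "cle E (Dc b top)" unfolding cle_def Dc_def E_def by (simp add: down_anti up_anti)
  show ?thesis
  proof
    assume "Cc a top \<in> K \<nu>"
    then have "E \<in> K \<nu>" using blk[OF nu _ Ctop_nt EM Ent] c1 by blast
    then show "Dc b top \<in> K \<nu>" using blk[OF nu _ Ent Dc_M Dtop_nt] c2 by blast
  next
    assume "Dc b top \<in> K \<nu>"
    then have "E \<in> K \<nu>" using blk[OF nu _ Dtop_nt EM Ent] c2 by blast
    then show "Cc a top \<in> K \<nu>" using blk[OF nu _ Ent Cc_M Ctop_nt] c1 by blast
  qed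
qed

lemma exists_ab:
  assumes nu: "\<nu> \<in> \<Lambda>"
  shows "\<exists>a b. R a b \<noteq> bot \<and> Cc a top \<in> K \<nu> \<and> Dc b top \<in> K \<nu>"
proof -
  have "K \<nu> - {cbot, ctop} \<noteq> {}" "K \<nu> \<subseteq> M"
    using decomp nu unfolding block_decomposition_def is_block_def sublattice_def by blast+
  then obtain g f where p: "(g, f) \<in> K \<nu>" "(g, f) \<notin> {ctop, cbot}" "(g, f) \<in> M" by auto
  then have gf: "g = down f" "f = up g" unfolding concepts_def by auto
  have "g \<noteq> (\<lambda>b. bot)" using M_bot[OF p(3)] p(2) by auto
  then obtain b where gb: "g b \<noteq> bot" by auto
  define D where "D = Dc b (g b)"
  have "phiB b (g b) \<le> g" by (simp add: phiB_def le_fun_def)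
  then have "fst D \<le> down (up g)" unfolding D_def Dc_def by (simp add: down_anti up_anti)
  then have D1: "fst D \<le> g" using gf dud by metis
  have D2: "phiB b (g b) \<le> fst D" unfolding D_def Dc_def by (simp add: ext_g)
  have Dnt: "D \<notin> {ctop, cbot}"
  proof
    assume "D \<in> {ctop, cbot}"
    then have "fst D = (\<lambda>b. top) \<or> fst D = (\<lambda>b. bot)" unfolding ctop_def cbot_def by auto
    moreover have "g \<noteq> (\<lambda>b. top)" using M_top[OF p(3)] p(2) by auto
    ultimately show False using D1 D2 gb unfolding le_fun_def phiB_def
      by (metis (full_types) bot.extremum_uniqueI top.extremum_uniqueI ext)
  qed
  have "cle D (g, f)" using D1 unfolding cle_def by simp
  then have "D \<in> K \<nu>" using blk[OF nu p(1,2) _ Dnt] unfolding D_def using Dc_M by blast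
  then have "b \<in> B_mu sw nw R \<sigma> (K \<nu>)" unfolding B_mu_eq D_def using Dnt D_def by blast
  then have Db: "Dc b top \<in> K \<nu>" using B_iff[OF nu] by blast
  from norm obtain a1 where a1: "R a1 b \<noteq> bot" unfolding normalized_context_def by blast
  then have "Cc a1 top \<in> K \<nu>" using link[OF a1 nu] Db by blast
  then show ?thesis using a1 Db by blast
qed

end

theorem proposition35:
  fixes cj sw nw :: "nat \<Rightarrow> 'l::complete_lattice \<Rightarrow> 'l \<Rightarrow> 'l"
    and n :: nat
    and R :: "'a \<Rightarrow> 'b \<Rightarrow> 'l"
    and \<sigma> :: "'a \<Rightarrow> 'b \<Rightarrow> nat"
    and \<Lambda> :: "'i set"
    and K :: "'i \<Rightarrow> (('b \<Rightarrow> 'l) \<times> ('a \<Rightarrow> 'l)) set"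
  assumes adj: "\<forall>i\<in>{1..n}. adjoint_triple (cj i) (sw i) (nw i)"
    and unit: "\<forall>i\<in>{1..n}. \<forall>x. cj i x top = x \<and> cj i top x = x"
    and sigma_range: "\<forall>a b. \<sigma> a b \<in> {1..n}"
    and norm: "normalized_context R"
    and decomp: "block_decomposition cle (concepts sw nw R \<sigma>) cbot ctop \<Lambda> K"
    and mu: "\<mu> \<in> \<Lambda>"
  shows "separable_subcontext R (A_mu sw nw R \<sigma> (K \<mu>)) (B_mu sw nw R \<sigma> (K \<mu>))"
proof -
  interpret dec35 cj sw nw n R \<sigma> \<Lambda> K
    by unfold_locales (use adj unit sigma_range norm decomp in auto)
  let ?Y = "A_mu sw nw R \<sigma> (K \<mu>)" and ?X = "B_mu sw nw R \<sigma> (K \<mu>)"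
  obtain a b where ab: "R a b \<noteq> bot" "Cc a top \<in> K \<mu>" "Dc b top \<in> K \<mu>"
    using exists_ab[OF mu] by blast
  have inY: "a \<in> ?Y" and inX: "b \<in> ?X" using ab A_iff[OF mu] B_iff[OF mu] by auto
  obtain \<nu> where nu: "\<nu> \<in> \<Lambda>" "\<nu> \<noteq> \<mu>"
  proof (rule ccontr)
    assume "\<not> thesis"
    then have "\<Lambda> = {\<mu>}" using that mu by blast
    moreover have "K \<mu> \<subset> M" "(\<Union>\<mu>\<in>\<Lambda>. K \<mu>) = M"
      using decomp mu unfolding block_decomposition_def is_block_def by auto
    ultimately show False by auto
  qed
  have indep: "K \<mu> \<inter> K \<nu> \<subseteq> {cbot, ctop}"
    using decomp mu nu unfolding block_decomposition_def independent_blocks_def by blast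
  obtain a' b' where ab': "Cc a' top \<in> K \<nu>" "Dc b' top \<in> K \<nu>"
    using exists_ab[OF nu(1)] by blast
  have "a' \<notin> ?Y"
  proof
    assume "a' \<in> ?Y"
    then have "Cc a' top \<in> K \<mu>" using A_iff[OF mu] by blast
    then show False using indep ab'(1) Ctop_nt by blast
  qed
  moreover have "b' \<notin> ?X"
  proof
    assume "b' \<in> ?X"
    then have "Dc b' top \<in> K \<mu>" using B_iff[OF mu] by blast
    then show False using indep ab'(2) Dtop_nt by blast
  qed
  moreover have "\<forall>a\<in>?Y. \<forall>b'. b' \<notin> ?X \<longrightarrow> R a b' = bot"
    using A_iff[OF mu] B_iff[OF mu] link[OF _ mu] by blast
  moreover have "\<forall>a'. \<forall>b\<in>?X. a' \<notin> ?Y \<longrightarrow> R a' b = bot"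
    using A_iff[OF mu] B_iff[OF mu] link[OF _ mu] by blast
  ultimately show ?thesis unfolding separable_subcontext_def using inY inX ab(1) by blast
qed

end
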